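(* Let $S:\mathbb{R}^m\times\mathbb{R}^n\to\mathbb{R}^q$ be a bilinear map with lifted linear operator $\mathscr{S}$, let $\mathcal{K}\subseteq\mathbb{R}^m\times\mathbb{R}^n$, let $\mathcal{K}'\subseteq\mathbb{R}^{m\times n}$ satisfy $\mathcal{K}'\cap\{W:\operatorname{rank}(W)\le1\}=\{xy^T:(x,y)\in\mathcal{K}\}$, and let $\mathcal{M}=\mathcal{K}'-\mathcal{K}'$. Assume $\mathcal{N}(\mathscr{S},1)\cap\mathcal{M}=\{0\}$. Let $\mathbf{M}=\sigma uv^T\in\mathcal{K}'$ be a rank one matrix ($\sigma>0$, $\|u\|_2=\|v\|_2=1$). Suppose that for every $X\in\mathcal{N}(\mathscr{S},2)\cap\mathcal{M}\setminus\{0\}$ either $u\notin\mathcal{C}(X)$ or $v\notin\mathcal{R}(X)$. Then, given $z=\mathscr{S}(\mathbf{M})$, $\mathbf{M}$ is successfully recovered by solving "minimize $\operatorname{rank}(W)$ subject to $\mathscr{S}(W)=z$, $W\in\mathcal{K}'$", i.e. $\mathbf{M}$ is its unique optimal solution.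
   Context: A map is bilinear if linear in each argument separately. For $j=1,\dots,q$ let $S_j$ be the unique matrix with $(S(x,y))_j=x^TS_jy$; the lifted operator is $(\mathscr{S}(W))_j=\operatorname{tr}(S_j^TW)$. $\mathcal{N}(\mathscr{S},k)=\{X:\operatorname{rank}(X)\le k,\ \mathscr{S}(X)=0\}$. $\mathcal{K}'-\mathcal{K}'=\{X_1-X_2:X_1,X_2\in\mathcal{K}'\}$. $\mathcal{C}(X)$ and $\mathcal{R}(X)$ denote the column space and row space of $X$. *)

theory Defs
  imports "HOL-Analysis.Analysis"
begin

definition coef_mat :: "(real^'m \<Rightarrow> real^'n \<Rightarrow> real^'q) \<Rightarrow> 'q \<Rightarrow> real^'n^'m" where
  "coef_mat S j = (THE A. \<forall>x y. S x y $ j = x \<bullet> (A *v y))"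

definition lift_op :: "(real^'m \<Rightarrow> real^'n \<Rightarrow> real^'q) \<Rightarrow> real^'n^'m \<Rightarrow> real^'q" where
  "lift_op S W = (\<chi> j. trace (transpose (coef_mat S j) ** W))"

definition null_rank :: "(real^'m \<Rightarrow> real^'n \<Rightarrow> real^'q) \<Rightarrow> nat \<Rightarrow> (real^'n^'m) set" where
  "null_rank S k = {X. rank X \<le> k \<and> lift_op S X = 0}"

definition outer :: "real^'m \<Rightarrow> real^'n \<Rightarrow> real^'n^'m" where
  "outer x y = (\<chi> i j. x $ i * y $ j)"

definition set_diff_minus :: "(real^'n^'m) set \<Rightarrow> (real^'n^'m) set" where
  "set_diff_minus K = {X1 - X2 | X1 X2. X1 \<in> K \<and> X2 \<in> K}"

definition col_space :: "real^'n^'m \<Rightarrow> (real^'m) set" where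
  "col_space X = span (columns X)"

definition row_space :: "real^'n^'m \<Rightarrow> (real^'n) set" where
  "row_space X = span (rows X)"

end

theory Submission
  imports Defs
begin

lemma lift_diff:
  fixes S :: "real^'m \<Rightarrow> real^'n \<Rightarrow> real^'q" and A B :: "real^'n^'m"
  shows "lift_op S (A - B) = lift_op S A - lift_op S B"
proof -
  have "C ** (A - B) = C ** A - C ** B" for C :: "real^'m^'n"
    by (vector matrix_matrix_mult_def sum_subtractf[symmetric] field_simps)
  note eq = this
  show ?thesis unfolding lift_op_def
    by (simp only: eq trace_sub vec_eq_iff vector_minus_component vec_lambda_beta) simp
qed

lemma outer_mulv: "outer x y *v w = (y \<bullet> w) *\<^sub>R x"
  by (simp add: vec_eq_iff outer_def matrix_vector_mult_def inner_vec_def sum_distrib_left mult_ac)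

lemma transpose_outer: "transpose (outer x y) = outer y x"
  by (simp add: vec_eq_iff outer_def transpose_def)

lemma column_outer: "column j (outer x y) = (y $ j) *\<^sub>R x"
  by (simp add: vec_eq_iff outer_def column_def)

lemma rank_outer_le1: "rank (outer (a::real^'m) (b::real^'n)) \<le> 1"
proof -
  have "columns (outer a b) \<subseteq> span {a}"
    by (auto simp: columns_def column_outer intro: span_mul span_base)
  then have "dim (columns (outer a b)) \<le> card {a}"
    by (intro dim_le_card) auto
  then show ?thesis by (simp add: column_rank_def)
qed

lemma rank_diff_outer_le2:
  "rank (outer (x::real^'m) (y::real^'n) - s *\<^sub>R outer u v) \<le> 2"
proof -
  have "columns (outer x y - s *\<^sub>R outer u v) \<subseteq> span {x, u}"
  proof
    fix c assume "c \<in> columns (outer x y - s *\<^sub>R outer u v)"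
    then obtain j where "c = column j (outer x y - s *\<^sub>R outer u v)"
      by (auto simp: columns_def)
    then have c: "c = (y $ j) *\<^sub>R x - (s * v $ j) *\<^sub>R u"
      by (simp add: column_def outer_def vec_eq_iff)
    show "c \<in> span {x, u}" unfolding c
      by (intro span_diff span_mul span_base) auto
  qed
  then have "dim (columns (outer x y - s *\<^sub>R outer u v)) \<le> card {x, u}"
    by (intro dim_le_card) auto
  also have "\<dots> \<le> 2" by (simp add: card_insert_if)
  finally show ?thesis by (simp add: column_rank_def)
qed

lemma rank_le1_outer:
  fixes W :: "real^'n^'m"
  assumes "rank W \<le> 1"
  shows "\<exists>x y. W = outer x y"
proof (cases "\<forall>j. column j W = 0")
  case True
  then have "W = outer 0 0" by (simp add: vec_eq_iff column_def outer_def)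
  then show ?thesis by blast
next
  case False
  then obtain j0 where x0: "column j0 W \<noteq> 0" by blast
  define x where "x = column j0 W"
  have "\<forall>j. \<exists>c. column j W = c *\<^sub>R x"
  proof
    fix j
    show "\<exists>c. column j W = c *\<^sub>R x"
    proof (rule ccontr)
      assume nc: "\<not> ?thesis"
      have nsp: "column j W \<notin> span {x}"
        using nc by (auto simp: span_singleton)
      have ind: "independent {column j W, x}"
        using nsp x0 x_def by (simp add: independent_insert)
      have "{column j W, x} \<subseteq> columns W" by (auto simp: columns_def x_def)
      then have "card {column j W, x} \<le> dim (columns W)"
        using ind by (intro independent_card_le_dim) auto
      moreover have "column j W \<noteq> x" using nsp span_base[of x "{x}"] by auto
      then have "card {column j W, x} = 2" by simp
      ultimately show False using assms by (simp add: column_rank_def)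
    qed
  qed
  then obtain c where c: "\<And>j. column j W = c j *\<^sub>R x" by metis
  have "W = outer x (\<chi> j. c j)"
  proof (simp add: vec_eq_iff outer_def, intro allI)
    fix i j
    have "column j W $ i = c j * x $ i" using c by simp
    then show "W $ i $ j = x $ i * c j" by (simp add: column_def)
  qed
  then show ?thesis by blast
qed

lemma scaleR_mulv: "((s::real) *\<^sub>R (A::real^'n^'m)) *v w = s *\<^sub>R (A *v w)"
  by (simp add: vec_eq_iff matrix_vector_mult_def sum_distrib_left mult_ac)

lemma mulv_scaleR: "(A::real^'n^'m) *v ((c::real) *\<^sub>R w) = c *\<^sub>R (A *v w)"
  by (simp add: vec_eq_iff matrix_vector_mult_def sum_distrib_left mult_ac)

lemma col_mem:
  fixes x u :: "real^'m" and y v :: "real^'n"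
  assumes nx: "x \<notin> span {u}" and ny: "y \<notin> span {v}" and v0: "v \<noteq> 0" and s0: "s \<noteq> 0"
  shows "u \<in> span (columns (outer x y - s *\<^sub>R outer u v))"
proof -
  define D where "D = outer x y - s *\<^sub>R outer u v"
  have y0: "y \<noteq> 0" using ny span_zero by auto
  define k where "k = (v \<bullet> y) / (y \<bullet> y)"
  define w where "w = v - k *\<^sub>R y"
  have yy: "y \<bullet> y \<noteq> 0" using y0 by simp
  have yw: "y \<bullet> w = 0" using yy by (simp add: w_def k_def inner_diff_right inner_commute)
  have vw: "v \<bullet> w = w \<bullet> w"
  proof -
    have "v = w + k *\<^sub>R y" by (simp add: w_def)
    then have "v \<bullet> w = w \<bullet> w + k * (y \<bullet> w)" by (metis inner_add_left inner_scaleR_left)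
    then show ?thesis using yw by simp
  qed
  have w0: "w \<noteq> 0"
  proof
    assume "w = 0"
    then have vk: "v = k *\<^sub>R y" by (simp add: w_def)
    then have "k \<noteq> 0" using v0 by auto
    then have "y = (1/k) *\<^sub>R v" using vk by simp
    then have "y \<in> span {v}" by (metis span_mul span_base singletonI)
    then show False using ny by simp
  qed
  have vw0: "v \<bullet> w \<noteq> 0" using vw w0 by simp
  have "D *v w = (- (s * (v \<bullet> w))) *\<^sub>R u"
    by (simp add: D_def matrix_vector_mult_diff_rdistrib outer_mulv scaleR_mulv yw)
  then have "D *v ((- 1 / (s * (v \<bullet> w))) *\<^sub>R w) = u"
    using s0 vw0 by (simp only: mulv_scaleR) simp
  then have "u = D *v ((- 1 / (s * (v \<bullet> w))) *\<^sub>R w)" by simp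
  then show ?thesis unfolding D_def by (metis D_def matrix_vector_mult_in_columnspace)
qed

theorem theorem2:
  fixes S :: "real^'m \<Rightarrow> real^'n \<Rightarrow> real^'q"
    and K :: "((real^'m) \<times> (real^'n)) set"
    and K' :: "(real^'n^'m) set"
    and z :: "real^'q" and \<sigma> :: real and u :: "real^'m" and v :: "real^'n"
  assumes "bilinear S"
    and "K' \<inter> {W. rank W \<le> 1} = {outer x y | x y. (x, y) \<in> K}"
    and "null_rank S 1 \<inter> set_diff_minus K' = {0}"
    and "\<sigma> > 0" and "norm u = 1" and "norm v = 1"
    and "(\<sigma> *\<^sub>R outer u v) \<in> K'"
    and "\<forall>X \<in> null_rank S 2 \<inter> set_diff_minus K' - {0}.
           u \<notin> col_space X \<or> v \<notin> row_space X"
    and "z = lift_op S (\<sigma> *\<^sub>R outer u v)"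
  shows "lift_op S (\<sigma> *\<^sub>R outer u v) = z
       \<and> (\<sigma> *\<^sub>R outer u v) \<in> K'
       \<and> (\<forall>W \<in> K'. lift_op S W = z \<and> W \<noteq> \<sigma> *\<^sub>R outer u v
             \<longrightarrow> rank (\<sigma> *\<^sub>R outer u v) < rank W)"
proof -
  define M where "M = \<sigma> *\<^sub>R outer u v"
  have u0: "u \<noteq> 0" using assms(5) by auto
  have v0: "v \<noteq> 0" using assms(6) by auto
  have s0: "\<sigma> \<noteq> 0" using assms(4) by simp
  have "M = outer (\<sigma> *\<^sub>R u) v" by (simp add: M_def vec_eq_iff outer_def)
  then have rM: "rank M \<le> 1" using rank_outer_le1 by metis
  have main: "2 \<le> rank W" if W: "W \<in> K'" "lift_op S W = z" "W \<noteq> M" for W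
  proof (rule ccontr)
    assume "\<not> 2 \<le> rank W"
    then have "rank W \<le> 1" by simp
    then obtain x y where Wxy: "W = outer x y" using rank_le1_outer by blast
    define D where "D = W - M"
    have Dd: "D \<in> set_diff_minus K'"
      unfolding set_diff_minus_def D_def using W(1) assms(7) M_def by blast
    have Dl: "lift_op S D = 0" using W(2) assms(9) by (simp add: D_def lift_diff M_def)
    have D0: "D \<noteq> 0" using W(3) by (simp add: D_def)
    have r1: False if "rank D \<le> 1"
    proof -
      have "D \<in> null_rank S 1 \<inter> set_diff_minus K'"
        using that Dl Dd by (simp add: null_rank_def)
      then show False using assms(3) D0 by blast
    qed
    show False
    proof (cases "x \<in> span {u}")
      case True
      then obtain c where "x = c *\<^sub>R u" by (auto simp: span_singleton)
      then have "D = outer u (c *\<^sub>R y - \<sigma> *\<^sub>R v)"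
        by (simp add: D_def Wxy M_def vec_eq_iff outer_def algebra_simps)
      then show False using r1 rank_outer_le1 by metis
    next
      case nx: False
      show False
      proof (cases "y \<in> span {v}")
        case True
        then obtain c where "y = c *\<^sub>R v" by (auto simp: span_singleton)
        then have "D = outer (c *\<^sub>R x - \<sigma> *\<^sub>R u) v"
          by (simp add: D_def Wxy M_def vec_eq_iff outer_def algebra_simps)
        then show False using r1 rank_outer_le1 by metis
      next
        case ny: False
        have DD: "D = outer x y - \<sigma> *\<^sub>R outer u v" by (simp add: D_def Wxy M_def)
        have r2: "rank D \<le> 2" unfolding DD by (rule rank_diff_outer_le2)
        have uc: "u \<in> col_space D" unfolding col_space_def DD
          using col_mem[OF nx ny v0 s0] .
        have tD: "transpose D = outer y x - \<sigma> *\<^sub>R outer v u"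
          by (simp add: DD vec_eq_iff outer_def transpose_def)
        have "v \<in> span (columns (transpose D))" unfolding tD
          using col_mem[OF ny nx u0 s0] .
        then have vr: "v \<in> row_space D" by (simp add: row_space_def)
        have "D \<in> null_rank S 2 \<inter> set_diff_minus K' - {0}"
          using r2 Dl Dd D0 by (simp add: null_rank_def)
        then show False using assms(8) uc vr by blast
      qed
    qed
  qed
  show ?thesis
    using assms(7,9) main rM unfolding M_def[symmetric] by fastforce
qed

end
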